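(* Let $\mathcal{S}$ be a state space, $\mathcal{A}$ a finite action space, $\rho$ a distribution on $\mathcal{S}$, $\pi_{\mathrm{ref}}$ a policy, $R>0$, and $r^*:\mathcal{S}\times\mathcal{A}\to[0,R]$. Let $\pi$ be any policy, $r:\mathcal{S}\times\mathcal{A}\to[-R,R]$ any reward function, and $\tilde\pi$ any policy with $\tilde\pi(a|s)>0$ for all $(s,a)$. Then $$\mathbb{E}_{s\sim\rho,a\sim\pi(\cdot|s),\tilde a\sim\pi_{\mathrm{ref}}(\cdot|s)}\Big[\big|\big(r^*(s,a)-r^*(s,\tilde a)\big)-\big(r(s,a)-r(s,\tilde a)\big)\big|\Big]\le8\sqrt2\,e^{2R}\sqrt{\mathrm{Cov}^{\pi|\tilde\pi}\cdot\mathbb{E}_{s\sim\rho,a\sim\tilde\pi(\cdot|s),\tilde a\sim\pi_{\mathrm{ref}}(\cdot|s)}\big[\mathbb{H}^2\big(\mathbb{P}_r(\cdot|s,a,\tilde a)\|\mathbb{P}_{r^*}(\cdot|s,a,\tilde a)\big)\big]}.$$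
   Context: Bradley–Terry model: $\mathbb{P}_r(y=1|s,a,\tilde a)=\sigma(r(s,a)-r(s,\tilde a))$, $\mathbb{P}_r(y=0|s,a,\tilde a)=1-\sigma(r(s,a)-r(s,\tilde a))$, $\sigma(x)=1/(1+e^{-x})$. $\mathrm{Cov}^{\pi|\tilde\pi}:=\mathbb{E}_{s\sim\rho,a\sim\pi(\cdot|s)}[\pi(a|s)/\tilde\pi(a|s)]$. Squared Hellinger distance between distributions on $\{0,1\}$: $\mathbb{H}^2(P\|Q)=\sum_{y\in\{0,1\}}(\sqrt{P(y)}-\sqrt{Q(y)})^2$. *)

theory Defs
  imports "HOL-Probability.Probability"
begin

definition sigmoid :: "real \<Rightarrow> real" where
  "sigmoid x = 1 / (1 + exp (- x))"

definition bt_prob :: "('s \<Rightarrow> 'a \<Rightarrow> real) \<Rightarrow> 's \<Rightarrow> 'a \<Rightarrow> 'a \<Rightarrow> nat \<Rightarrow> real" where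
  "bt_prob r s a a' y =
     (if y = 1 then sigmoid (r s a - r s a') else 1 - sigmoid (r s a - r s a'))"

definition hellinger_sq :: "(nat \<Rightarrow> real) \<Rightarrow> (nat \<Rightarrow> real) \<Rightarrow> real" where
  "hellinger_sq P Q = (\<Sum>y\<in>{0,1::nat}. (sqrt (P y) - sqrt (Q y))^2)"

definition is_policy :: "('s \<Rightarrow> 'a::finite \<Rightarrow> real) \<Rightarrow> bool" where
  "is_policy \<pi> \<longleftrightarrow> (\<forall>s a. 0 \<le> \<pi> s a) \<and> (\<forall>s. (\<Sum>a\<in>UNIV. \<pi> s a) = 1)"

definition Cov :: "'s measure \<Rightarrow> ('s \<Rightarrow> 'a::finite \<Rightarrow> real) \<Rightarrow> ('s \<Rightarrow> 'a \<Rightarrow> real) \<Rightarrow> real" where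
  "Cov \<rho> \<pi> \<pi>t = (\<integral>s. (\<Sum>a\<in>UNIV. \<pi> s a * (\<pi> s a / \<pi>t s a)) \<partial>\<rho>)"

end

theory Submission
  imports Defs
begin

lemma sigmoid_bounds: "0 < sigmoid x" "sigmoid x < 1"
  unfolding sigmoid_def by (auto simp: divide_simps add_pos_pos)

lemma sigmoid_deriv: "(sigmoid has_real_derivative exp (-x) / (1 + exp (-x))^2) (at x)"
  unfolding sigmoid_def[abs_def]
  by (auto intro!: derivative_eq_intros simp: power2_eq_square add_pos_pos divide_simps)
    (metis add_pos_pos exp_gt_zero less_numeral_extra(1,3))

lemma sigmoid_deriv_lb:
  fixes z B :: real
  assumes "\<bar>z\<bar> \<le> B"
  shows "exp (-B) / 4 \<le> exp (-z) / (1 + exp (-z))^2"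
proof -
  define u where "u = exp (-z)"
  have u1: "u > 0" unfolding u_def by (rule exp_gt_zero)
  have u2: "exp (-B) \<le> u" using assms unfolding u_def by (simp add: abs_le_iff)
  have u3: "u \<le> exp B" using assms unfolding u_def by (simp add: abs_le_iff)
  note u = u1 u2 u3
  have eB: "exp (-B) * exp B = 1" by (simp add: exp_minus)
  have "exp (-B) / 4 \<le> u / (1+u)^2"
  proof (cases "u \<le> 1")
    case True
    have "(1+u)^2 \<le> 4" using True u power_mono[of "1+u" 2 2] by simp
    hence "u / 4 \<le> u / (1+u)^2" using u by (intro divide_left_mono) auto
    moreover have "exp (-B) / 4 \<le> u / 4" using u2 by simp
    ultimately show ?thesis by linarith
  next
    case False
    have "(1+u)^2 \<le> 4*u^2" using False u power_mono[of "1+u" "2*u" 2] by (simp add: power_mult_distrib)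
    hence "u / (4*u^2) \<le> u / (1+u)^2" using u by (intro divide_left_mono) auto
    moreover have "u / (4*u^2) = 1/(4*u)" using u by (simp add: power2_eq_square)
    moreover have "exp (-B) / 4 \<le> 1/(4*u)"
    proof -
      have "exp (-B) = 1 / exp B" by (simp add: exp_minus inverse_eq_divide)
      also have "\<dots> \<le> 1 / u" using u by (intro divide_left_mono) auto
      finally show ?thesis by simp
    qed
    ultimately show ?thesis by linarith
  qed
  thus ?thesis by (simp add: u_def)
qed

lemma sigmoid_lip:
  assumes "\<bar>x\<bar> \<le> B" "\<bar>y\<bar> \<le> B"
  shows "\<bar>x - y\<bar> \<le> 4 * exp B * \<bar>sigmoid x - sigmoid y\<bar>"
proof -
  have main: "b - a \<le> 4 * exp B * (sigmoid b - sigmoid a)" if "a < b" "\<bar>a\<bar> \<le> B" "\<bar>b\<bar> \<le> B" for a b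
  proof -
    obtain z where z: "a < z" "z < b" "sigmoid b - sigmoid a = (b - a) * (exp (-z) / (1 + exp (-z))^2)"
      using MVT2[OF \<open>a < b\<close>, of sigmoid "\<lambda>x. exp (-x) / (1 + exp (-x))^2"] sigmoid_deriv by blast
    have "\<bar>z\<bar> \<le> B" using z that by auto
    hence lb: "exp (-B) / 4 \<le> exp (-z) / (1 + exp (-z))^2" by (rule sigmoid_deriv_lb)
    have "(b - a) * (exp (-B) / 4) \<le> (b - a) * (exp (-z) / (1 + exp (-z))^2)"
      using lb that by (intro mult_left_mono) auto
    hence "(b - a) * (exp (-B) / 4) \<le> sigmoid b - sigmoid a"
      using z(3) by simp
    hence "4 * exp B * ((b - a) * (exp (-B) / 4)) \<le> 4 * exp B * (sigmoid b - sigmoid a)"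
      by (intro mult_left_mono) auto
    moreover have "4 * exp B * ((b - a) * (exp (-B) / 4)) = b - a" by (simp add: exp_minus field_simps)
    ultimately show ?thesis by linarith
  qed
  show ?thesis
  proof (cases x y rule: linorder_cases)
    case less
    have h: "y - x \<le> 4 * exp B * (sigmoid y - sigmoid x)" using main[of x y] assms less by simp
    have "4 * exp B * (sigmoid y - sigmoid x) \<le> 4 * exp B * \<bar>sigmoid x - sigmoid y\<bar>"
      by (intro mult_left_mono) auto
    moreover have "\<bar>x - y\<bar> = y - x" using less by simp
    ultimately show ?thesis using h by linarith
  next
    case greater
    have h: "x - y \<le> 4 * exp B * (sigmoid x - sigmoid y)" using main[of y x] assms greater by simp
    have "4 * exp B * (sigmoid x - sigmoid y) \<le> 4 * exp B * \<bar>sigmoid x - sigmoid y\<bar>"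
      by (intro mult_left_mono) auto
    moreover have "\<bar>x - y\<bar> = x - y" using greater by simp
    ultimately show ?thesis using h by linarith
  qed simp
qed

lemma hel_lb:
  assumes "0 \<le> p" "0 \<le> q" "p \<le> 1" "q \<le> 1"
  shows "\<bar>p - q\<bar> \<le> 2 * sqrt ((sqrt p - sqrt q)^2 + (sqrt (1-p) - sqrt (1-q))^2)"
proof -
  have "\<bar>p - q\<bar> = \<bar>sqrt p - sqrt q\<bar> * (sqrt p + sqrt q)"
  proof -
    have "p - q = (sqrt p - sqrt q) * (sqrt p + sqrt q)"
      using assms by (simp add: algebra_simps)
    thus ?thesis using assms by (simp add: abs_mult abs_of_nonneg)
  qed
  also have "\<dots> \<le> \<bar>sqrt p - sqrt q\<bar> * 2"
  proof -
    have "sqrt p \<le> 1" "sqrt q \<le> 1" using assms by auto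
    hence "sqrt p + sqrt q \<le> 2" by linarith
    thus ?thesis by (intro mult_left_mono) auto
  qed
  also have "\<bar>sqrt p - sqrt q\<bar> = sqrt ((sqrt p - sqrt q)^2)" by simp
  also have "\<dots> \<le> sqrt ((sqrt p - sqrt q)^2 + (sqrt (1-p) - sqrt (1-q))^2)" by simp
  finally show ?thesis by simp
qed

lemma key_pw:
  fixes R :: real
  assumes "\<bar>x\<bar> \<le> 2*R" "\<bar>y\<bar> \<le> 2*R"
  shows "\<bar>x - y\<bar> \<le> 8 * exp (2*R) *
     sqrt ((sqrt (sigmoid y) - sqrt (sigmoid x))^2 + (sqrt (1 - sigmoid y) - sqrt (1 - sigmoid x))^2)"
proof -
  have 1: "\<bar>x - y\<bar> \<le> 4 * exp (2*R) * \<bar>sigmoid y - sigmoid x\<bar>"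
    using sigmoid_lip[OF assms] by (simp add: abs_minus_commute)
  have 2: "\<bar>sigmoid y - sigmoid x\<bar> \<le> 2 * sqrt ((sqrt (sigmoid y) - sqrt (sigmoid x))^2 + (sqrt (1 - sigmoid y) - sqrt (1 - sigmoid x))^2)"
    using sigmoid_bounds[of x] sigmoid_bounds[of y] by (intro hel_lb) auto
  have "4 * exp (2*R) * \<bar>sigmoid y - sigmoid x\<bar> \<le> 4 * exp (2*R) * (2 * sqrt ((sqrt (sigmoid y) - sqrt (sigmoid x))^2 + (sqrt (1 - sigmoid y) - sqrt (1 - sigmoid x))^2))"
    by (rule mult_left_mono[OF 2]) simp
  with 1 show ?thesis by linarith
qed

lemma amgm:
  fixes A B t :: real
  assumes "A \<ge> 0" "B \<ge> 0" "t > 0"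
  shows "sqrt (A * B) \<le> (t * A + B / t) / 2"
proof -
  have "sqrt (A*B) = sqrt (t*A) * sqrt (B/t)" using assms by (simp add: real_sqrt_mult[symmetric])
  moreover have "2 * (sqrt (t*A) * sqrt (B/t)) \<le> (sqrt (t*A))^2 + (sqrt (B/t))^2"
    using sum_squares_bound[of "sqrt (t*A)" "sqrt (B/t)"] by simp
  moreover have "(sqrt (t*A))^2 = t*A" "(sqrt (B/t))^2 = B/t" using assms by auto
  ultimately show ?thesis by simp
qed

lemma pw:
  fixes w v pt H t D K :: real
  assumes "w \<ge> 0" "v \<ge> 0" "pt > 0" "H \<ge> 0" "t > 0" "D \<le> K * sqrt H" "K \<ge> 0"
  shows "w * v * D \<le> K * (t * (w * (w / pt) * v) + pt * v * H / t) / 2"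
proof -
  have "w * v * D \<le> w * v * (K * sqrt H)" using assms by (intro mult_left_mono) auto
  also have "w * v * sqrt H = sqrt ((w * (w / pt) * v) * (pt * v * H))"
    using assms by (simp add: real_sqrt_mult power2_eq_square[symmetric] field_simps)
  hence "w * v * (K * sqrt H) = K * sqrt ((w * (w / pt) * v) * (pt * v * H))" by (simp add: algebra_simps)
  also have "\<dots> \<le> K * ((t * (w * (w / pt) * v) + pt * v * H / t) / 2)"
    using assms by (intro mult_left_mono amgm) auto
  finally show ?thesis by simp
qed

lemma frac_lt:
  fixes a L :: real
  assumes "0 \<le> a" "0 < L"
  shows "a * L / (2 * a + 1) < L"
proof -
  have "a * L < L * (2 * a + 1)"
    using mult_nonneg_nonneg[OF assms(1) less_imp_le[OF assms(2)]] assms(2) by (simp add: algebra_simps)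
  thus ?thesis using assms by (simp add: pos_divide_less_eq)
qed

lemma opt:
  fixes L c A E :: real
  assumes "\<And>t. t > 0 \<Longrightarrow> L \<le> c * (t * A + E / t)" "A \<ge> 0" "E \<ge> 0" "c \<ge> 0"
  shows "L \<le> 2 * c * sqrt (A * E)"
proof (cases "L \<le> 0")
  case True
  have "0 \<le> 2 * c * sqrt (A * E)" using assms by simp
  thus ?thesis using True by linarith
next
  case False
  show ?thesis
  proof (cases "A = 0")
    case True
    have "0 \<le> c*E" using assms by simp
    hence "0 < (2*c*E+1)/L" using False by simp
    hence "L \<le> c * (E / ((2*c*E+1)/L))" using assms(1)[of "(2*c*E+1)/L"] True
      by simp
    also have "\<dots> = c*E*L/(2*c*E+1)" using False by simp
    also have "\<dots> < L" using frac_lt[OF \<open>0 \<le> c*E\<close>, of L] False by (simp add: mult.assoc)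
    finally show ?thesis by simp
  next
    case A: False
    show ?thesis
    proof (cases "E = 0")
      case True
      have "0 \<le> c*A" using assms by simp
      hence "0 < L/(2*c*A+1)" using False by simp
      hence "L \<le> c * (L/(2*c*A+1) * A)" using assms(1)[of "L/(2*c*A+1)"] True
        by simp
      also have "\<dots> = c*A*L/(2*c*A+1)" by simp
      also have "\<dots> < L" using frac_lt[OF \<open>0 \<le> c*A\<close>, of L] False by (simp add: mult.assoc)
      finally show ?thesis by simp
    next
      case E: False
      have Ap: "A > 0" "E > 0" using A E assms by auto
      define t where "t = sqrt (E / A)"
      have tp: "t > 0" using Ap by (simp add: t_def)
      have hA: "sqrt (A * A) = A" using Ap by simp
      have "t * A = sqrt (E / A) * sqrt (A * A)" by (simp only: t_def hA)
      also have "\<dots> = sqrt (E / A * (A * A))" by (rule real_sqrt_mult[symmetric])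
      also have "E / A * (A * A) = A * E" using Ap by (simp add: field_simps)
      finally have 1: "t * A = sqrt (A * E)" by simp
      have hE: "sqrt (E * E) = E" using Ap by simp
      have "E / t = sqrt (E * E) / sqrt (E / A)" by (simp only: t_def hE)
      also have "\<dots> = sqrt (E * E / (E / A))" by (rule real_sqrt_divide[symmetric])
      also have "E * E / (E / A) = A * E" using Ap by (simp add: field_simps)
      finally have 2: "E / t = sqrt (A * E)" by simp
      show ?thesis using assms(1)[OF tp] 1 2 by simp
    qed
  qed
qed

lemma sq_le1:
  fixes a b :: real
  assumes "0 \<le> a" "a \<le> 1" "0 \<le> b" "b \<le> 1"
  shows "(a - b)^2 \<le> 1"
proof -
  have "\<bar>a - b\<bar> \<le> 1" using assms by linarith
  hence "\<bar>a - b\<bar>^2 \<le> 1" using power_le_one[of "\<bar>a - b\<bar>" 2] by simp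
  thus ?thesis by (simp only: power2_abs)
qed

theorem lemmaH3:
  fixes \<rho> :: "'s measure"
    and \<pi>ref \<pi> \<pi>t rstar r :: "'s \<Rightarrow> 'a::finite \<Rightarrow> real"
    and R :: real
  assumes rho: "prob_space \<rho>"
    and R_pos: "R > 0"
    and pref: "is_policy \<pi>ref" and pol: "is_policy \<pi>" and polt: "is_policy \<pi>t"
    and pt_pos: "\<forall>s a. \<pi>t s a > 0"
    and rstar_range: "\<forall>s a. 0 \<le> rstar s a \<and> rstar s a \<le> R"
    and r_range: "\<forall>s a. -R \<le> r s a \<and> r s a \<le> R"
    and meas: "\<forall>a. (\<lambda>s. \<pi>ref s a) \<in> borel_measurable \<rho> \<and> (\<lambda>s. \<pi> s a) \<in> borel_measurable \<rho>
                 \<and> (\<lambda>s. \<pi>t s a) \<in> borel_measurable \<rho> \<and> (\<lambda>s. rstar s a) \<in> borel_measurable \<rho>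
                 \<and> (\<lambda>s. r s a) \<in> borel_measurable \<rho>"
    and cov_int: "integrable \<rho> (\<lambda>s. \<Sum>a\<in>UNIV. \<pi> s a * (\<pi> s a / \<pi>t s a))"
  shows "(\<integral>s. (\<Sum>a\<in>UNIV. \<Sum>a'\<in>UNIV. \<pi> s a * \<pi>ref s a' *
             \<bar>(rstar s a - rstar s a') - (r s a - r s a')\<bar>) \<partial>\<rho>)
         \<le> 8 * sqrt 2 * exp (2 * R) *
            sqrt (Cov \<rho> \<pi> \<pi>t *
              (\<integral>s. (\<Sum>a\<in>UNIV. \<Sum>a'\<in>UNIV. \<pi>t s a * \<pi>ref s a' *
                  hellinger_sq (bt_prob r s a a') (bt_prob rstar s a a')) \<partial>\<rho>))"
proof -
  interpret P: prob_space \<rho> by (rule rho)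
  define K where "K = 8 * exp (2*R)"
  have K0: "K \<ge> 0" unfolding K_def by simp
  define H where "H s a a' = hellinger_sq (bt_prob r s a a') (bt_prob rstar s a a')" for s a a'
  have Hexp: "H s a a' = (sqrt (sigmoid (r s a - r s a')) - sqrt (sigmoid (rstar s a - rstar s a')))^2
     + (sqrt (1 - sigmoid (r s a - r s a')) - sqrt (1 - sigmoid (rstar s a - rstar s a')))^2" for s a a'
    by (simp add: H_def hellinger_sq_def bt_prob_def add.commute)
  have H0: "0 \<le> H s a a'" for s a a' unfolding Hexp by simp
  have H2: "H s a a' \<le> 2" for s a a'
  proof -
    have b1: "0 \<le> sigmoid x" "sigmoid x \<le> 1" for x using sigmoid_bounds[of x] by auto
    have "(sqrt (sigmoid (r s a - r s a')) - sqrt (sigmoid (rstar s a - rstar s a')))^2 \<le> 1"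
      by (rule sq_le1) (use b1 in auto)
    moreover have "(sqrt (1 - sigmoid (r s a - r s a')) - sqrt (1 - sigmoid (rstar s a - rstar s a')))^2 \<le> 1"
      by (rule sq_le1) (use b1 in auto)
    ultimately show ?thesis unfolding Hexp by linarith
  qed
  have keyb: "\<bar>(rstar s a - rstar s a') - (r s a - r s a')\<bar> \<le> K * sqrt (H s a a')" for s a a'
  proof -
    have "\<bar>rstar s a - rstar s a'\<bar> \<le> 2*R" "\<bar>r s a - r s a'\<bar> \<le> 2*R"
    proof -
      have "0 \<le> rstar s a" "rstar s a \<le> R" "0 \<le> rstar s a'" "rstar s a' \<le> R"
        "-R \<le> r s a" "r s a \<le> R" "-R \<le> r s a'" "r s a' \<le> R"
        using rstar_range r_range by auto
      thus "\<bar>rstar s a - rstar s a'\<bar> \<le> 2*R" "\<bar>r s a - r s a'\<bar> \<le> 2*R"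
        using R_pos by (simp_all add: abs_le_iff)
    qed
    from key_pw[OF this] show ?thesis unfolding K_def Hexp .
  qed
  define f where "f s = (\<Sum>a\<in>UNIV. \<Sum>a'\<in>UNIV. \<pi> s a * \<pi>ref s a' *
             \<bar>(rstar s a - rstar s a') - (r s a - r s a')\<bar>)" for s
  define g where "g s = (\<Sum>a\<in>UNIV. \<pi> s a * (\<pi> s a / \<pi>t s a))" for s
  define h where "h s = (\<Sum>a\<in>UNIV. \<Sum>a'\<in>UNIV. \<pi>t s a * \<pi>ref s a' * H s a a')" for s
  have g0: "g s \<ge> 0" for s unfolding g_def using pol pt_pos
    by (intro sum_nonneg) (auto simp: is_policy_def less_imp_le)
  have h0: "h s \<ge> 0" for s unfolding h_def using polt pref H0
    by (intro sum_nonneg mult_nonneg_nonneg) (auto simp: is_policy_def)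
  have h2: "h s \<le> 2" for s
  proof -
    have "h s \<le> (\<Sum>a\<in>UNIV. \<Sum>a'\<in>UNIV. \<pi>t s a * \<pi>ref s a' * 2)" unfolding h_def
      using polt pref H2 by (intro sum_mono mult_left_mono) (auto simp: is_policy_def)
    also have "\<dots> = 2" using polt pref
      by (simp add: is_policy_def flip: sum_distrib_left sum_distrib_right mult.assoc)
    finally show ?thesis .
  qed
  have [measurable]: "(\<lambda>s. \<pi>ref s a) \<in> borel_measurable \<rho>" "(\<lambda>s. \<pi>t s a) \<in> borel_measurable \<rho>"
    "(\<lambda>s. rstar s a) \<in> borel_measurable \<rho>" "(\<lambda>s. r s a) \<in> borel_measurable \<rho>" for a
    using meas by auto
  have hm: "h \<in> borel_measurable \<rho>" unfolding h_def Hexp sigmoid_def by measurable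
  have hint: "integrable \<rho> h"
    by (rule P.integrable_const_bound[where B=2]) (use h0 h2 hm in auto)
  have gint: "integrable \<rho> g" using cov_int unfolding g_def .
  have Cov_eq: "Cov \<rho> \<pi> \<pi>t = (\<integral>s. g s \<partial>\<rho>)" unfolding Cov_def g_def ..
  have pwb: "f s \<le> (K*t/2) * g s + (K/(2*t)) * h s" if t: "t > 0" for s t
  proof -
    have e: "K*(t*X + Y/t)/2 = (K*t/2)*X + (K/(2*t))*Y" for X Y using t by (simp add: field_simps)
    have sref: "(\<Sum>a'\<in>UNIV. c * \<pi>ref s a') = c" for c
      using pref by (simp add: is_policy_def flip: sum_distrib_left)
    have "f s \<le> (\<Sum>a\<in>UNIV. \<Sum>a'\<in>UNIV. K * (t * (\<pi> s a * (\<pi> s a / \<pi>t s a) * \<pi>ref s a') + \<pi>t s a * \<pi>ref s a' * H s a a' / t) / 2)"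
      unfolding f_def using pol pref pt_pos H0 t K0 keyb
      by (intro sum_mono pw) (auto simp: is_policy_def)
    also have "\<dots> = (\<Sum>a\<in>UNIV. \<Sum>a'\<in>UNIV. (K*t/2) * (\<pi> s a * (\<pi> s a / \<pi>t s a) * \<pi>ref s a') + (K/(2*t)) * (\<pi>t s a * \<pi>ref s a' * H s a a'))"
      by (simp only: e)
    also have "\<dots> = (K*t/2) * (\<Sum>a\<in>UNIV. \<Sum>a'\<in>UNIV. \<pi> s a * (\<pi> s a / \<pi>t s a) * \<pi>ref s a') + (K/(2*t)) * h s"
      unfolding h_def by (simp add: sum.distrib sum_distrib_left)
    also have "(\<Sum>a\<in>UNIV. \<Sum>a'\<in>UNIV. \<pi> s a * (\<pi> s a / \<pi>t s a) * \<pi>ref s a') = g s"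
      unfolding g_def by (simp only: sref)
    finally show ?thesis .
  qed
  have rhs0: "0 \<le> (K*t/2) * g s + (K/(2*t)) * h s" if "t > 0" for s t
    using that K0 g0 h0 by simp
  have main: "(\<integral>s. f s \<partial>\<rho>) \<le> (K/2) * (t * (\<integral>s. g s \<partial>\<rho>) + (\<integral>s. h s \<partial>\<rho>) / t)" if t: "t > 0" for t
  proof -
    have "(\<integral>s. f s \<partial>\<rho>) \<le> (\<integral>s. (K*t/2) * g s + (K/(2*t)) * h s \<partial>\<rho>)"
      by (rule integral_mono') (use gint hint pwb[OF t] rhs0[OF t] in auto)
    also have "\<dots> = (K*t/2) * (\<integral>s. g s \<partial>\<rho>) + (K/(2*t)) * (\<integral>s. h s \<partial>\<rho>)"
      using gint hint by simp
    also have "\<dots> = (K/2) * (t * (\<integral>s. g s \<partial>\<rho>) + (\<integral>s. h s \<partial>\<rho>) / t)"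
      using t by (simp add: field_simps)
    finally show ?thesis .
  qed
  have Ag: "0 \<le> (\<integral>s. g s \<partial>\<rho>)" using g0 by simp
  have Eh: "0 \<le> (\<integral>s. h s \<partial>\<rho>)" using h0 by simp
  have "(\<integral>s. f s \<partial>\<rho>) \<le> 2 * (K/2) * sqrt ((\<integral>s. g s \<partial>\<rho>) * (\<integral>s. h s \<partial>\<rho>))"
    by (rule opt[OF main Ag Eh]) (use K0 in auto)
  also have "\<dots> = 8 * 1 * exp (2 * R) * sqrt ((\<integral>s. g s \<partial>\<rho>) * (\<integral>s. h s \<partial>\<rho>))"
    unfolding K_def by simp
  also have "\<dots> \<le> 8 * sqrt 2 * exp (2 * R) * sqrt ((\<integral>s. g s \<partial>\<rho>) * (\<integral>s. h s \<partial>\<rho>))"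
    using Ag Eh by (intro mult_right_mono) auto
  finally show ?thesis unfolding Cov_eq by (simp only: f_def[abs_def] h_def[abs_def] H_def[abs_def])
qed
end
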